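(* There exist $K$-algebras which are elementwise locally unit-regular but not locally unit-regular.
   Context: $K$ is a field; algebras are associative, not necessarily unital. A unital ring $S$ is unit-regular if for each $x\in S$ there is a unit $u$ of $S$ with $xux = x$. A $K$-algebra $R$ is locally unit-regular if every finite subset of $R$ is contained in a $K$-subalgebra of $R$ that has its own identity element and is unit-regular. A ring $R$ is elementwise locally unit-regular if for each $x \in R$ there exist an idempotent $e \in R$ and a unit $u$ of the corner ring $eRe$ (with identity $e$) such that $x \in eRe$ and $xux = x$. *)

theory Defs
  imports Main
begin

text \<open>A (not necessarily unital, associative) algebra over a field 'k, given on an
explicit carrier set.\<close>

record ('k, 'a) kalg =
  carr :: "'a set"
  add  :: "'a \<Rightarrow> 'a \<Rightarrow> 'a"
  mul  :: "'a \<Rightarrow> 'a \<Rightarrow> 'a"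
  zer  :: "'a"
  smul :: "'k \<Rightarrow> 'a \<Rightarrow> 'a"

definition is_kalgebra :: "('k::field, 'a) kalg \<Rightarrow> bool" where
  "is_kalgebra A \<longleftrightarrow>
     zer A \<in> carr A \<and>
     (\<forall>x\<in>carr A. \<forall>y\<in>carr A. add A x y \<in> carr A \<and> mul A x y \<in> carr A) \<and>
     (\<forall>c. \<forall>x\<in>carr A. smul A c x \<in> carr A) \<and>
     (\<forall>x\<in>carr A. \<forall>y\<in>carr A. \<forall>z\<in>carr A. add A (add A x y) z = add A x (add A y z)) \<and>
     (\<forall>x\<in>carr A. \<forall>y\<in>carr A. add A x y = add A y x) \<and>
     (\<forall>x\<in>carr A. add A (zer A) x = x) \<and>
     (\<forall>x\<in>carr A. \<exists>y\<in>carr A. add A x y = zer A) \<and>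
     (\<forall>x\<in>carr A. \<forall>y\<in>carr A. \<forall>z\<in>carr A. mul A (mul A x y) z = mul A x (mul A y z)) \<and>
     (\<forall>x\<in>carr A. \<forall>y\<in>carr A. \<forall>z\<in>carr A.
        mul A x (add A y z) = add A (mul A x y) (mul A x z) \<and>
        mul A (add A x y) z = add A (mul A x z) (mul A y z)) \<and>
     (\<forall>a b. \<forall>x\<in>carr A. smul A (a + b) x = add A (smul A a x) (smul A b x)) \<and>
     (\<forall>a. \<forall>x\<in>carr A. \<forall>y\<in>carr A. smul A a (add A x y) = add A (smul A a x) (smul A a y)) \<and>
     (\<forall>a b. \<forall>x\<in>carr A. smul A (a * b) x = smul A a (smul A b x)) \<and>
     (\<forall>x\<in>carr A. smul A 1 x = x) \<and>
     (\<forall>a. \<forall>x\<in>carr A. \<forall>y\<in>carr A.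
        smul A a (mul A x y) = mul A (smul A a x) y \<and>
        smul A a (mul A x y) = mul A x (smul A a y))"

text \<open>K-subalgebra: a subset containing 0 and closed under the operations
(additive inverses are scalar multiples by -1).\<close>
definition is_subalgebra :: "('k::field, 'a) kalg \<Rightarrow> 'a set \<Rightarrow> bool" where
  "is_subalgebra A S \<longleftrightarrow> S \<subseteq> carr A \<and> zer A \<in> S \<and>
     (\<forall>x\<in>S. \<forall>y\<in>S. add A x y \<in> S \<and> mul A x y \<in> S) \<and>
     (\<forall>c. \<forall>x\<in>S. smul A c x \<in> S)"

definition is_identity_of :: "('k, 'a) kalg \<Rightarrow> 'a set \<Rightarrow> 'a \<Rightarrow> bool" where
  "is_identity_of A S e \<longleftrightarrow> e \<in> S \<and> (\<forall>x\<in>S. mul A e x = x \<and> mul A x e = x)"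

definition is_unit_in :: "('k, 'a) kalg \<Rightarrow> 'a set \<Rightarrow> 'a \<Rightarrow> 'a \<Rightarrow> bool" where
  "is_unit_in A S e u \<longleftrightarrow> u \<in> S \<and> (\<exists>v\<in>S. mul A u v = e \<and> mul A v u = e)"

definition unit_regular_in :: "('k, 'a) kalg \<Rightarrow> 'a set \<Rightarrow> 'a \<Rightarrow> bool" where
  "unit_regular_in A S e \<longleftrightarrow>
     (\<forall>x\<in>S. \<exists>u. is_unit_in A S e u \<and> mul A (mul A x u) x = x)"

definition locally_unit_regular :: "('k::field, 'a) kalg \<Rightarrow> bool" where
  "locally_unit_regular A \<longleftrightarrow>
     (\<forall>F. finite F \<and> F \<subseteq> carr A \<longrightarrow>
        (\<exists>S e. is_subalgebra A S \<and> F \<subseteq> S \<and> is_identity_of A S e \<and> unit_regular_in A S e))"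

definition corner :: "('k, 'a) kalg \<Rightarrow> 'a \<Rightarrow> 'a set" where
  "corner A e = {mul A e (mul A r e) | r. r \<in> carr A}"

definition elementwise_locally_unit_regular :: "('k, 'a) kalg \<Rightarrow> bool" where
  "elementwise_locally_unit_regular A \<longleftrightarrow>
     (\<forall>x\<in>carr A. \<exists>e\<in>carr A. mul A e e = e \<and> x \<in> corner A e \<and>
        (\<exists>u. is_unit_in A (corner A e) e u \<and> mul A (mul A x u) x = x))"

end

theory Submission
  imports Defs "HOL.Vector_Spaces" "HOL-Library.Poly_Mapping" "HOL-Library.Countable_Set"
begin


abbreviation lk :: "('a \<Rightarrow>\<^sub>0 'b::zero) \<Rightarrow> 'a \<Rightarrow> 'b" where "lk \<equiv> Poly_Mapping.lookup"
abbreviation keys :: "('a \<Rightarrow>\<^sub>0 'b::zero) \<Rightarrow> 'a set" where "keys \<equiv> Poly_Mapping.keys"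

type_synonym 'k vec = "nat \<Rightarrow>\<^sub>0 'k"

definition sc :: "'k::field \<Rightarrow> 'k vec \<Rightarrow> 'k vec" where
  "sc c v = Poly_Mapping.map ((*) c) v"

lemma lookup_sc[simp]: "lk (sc c v) i = c * lk v i"
  by (simp add: sc_def Poly_Mapping.map.rep_eq when_def)

interpretation V: vector_space "sc :: 'k::field \<Rightarrow> 'k vec \<Rightarrow> 'k vec"
  by unfold_locales (auto intro!: poly_mapping_eqI simp: lookup_add algebra_simps)

interpretation VV: vector_space_pair "sc :: 'k::field \<Rightarrow> _" "sc :: 'k::field \<Rightarrow> _" ..

abbreviation lin :: "('k::field vec \<Rightarrow> 'k vec) \<Rightarrow> bool" where
  "lin f \<equiv> Vector_Spaces.linear sc sc f"

definition bas :: "nat \<Rightarrow> 'k::field vec" where "bas j = Poly_Mapping.single j 1"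

lemma lookup_bas: "lk (bas j) i = (if j = i then 1 else 0)"
  by (simp add: bas_def lookup_single when_def)

lemma bas_inj: "inj bas"
  by (rule injI) (metis lookup_bas one_neq_zero)

lemma bas_nz: "bas j \<noteq> 0"
  by (metis lookup_bas lookup_zero one_neq_zero)

lemma vec_sum: "v = (\<Sum>i\<in>keys v. sc (lk v i) (bas i))"
proof (rule poly_mapping_eqI)
  fix k show "lk v k = lk (\<Sum>i\<in>keys v. sc (lk v i) (bas i)) k"
    by (cases "k \<in> keys v") (auto simp: lookup_sum lookup_bas in_keys_iff if_distrib sum.If_cases)
qed

lemma span_bas: "V.span (range bas) = (UNIV :: 'k::field vec set)"
proof -
  have "v \<in> V.span (range bas)" for v :: "'k vec"
  proof -
    have "(\<Sum>i\<in>keys v. sc (lk v i) (bas i)) \<in> V.span (range bas)"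
      by (intro V.span_sum V.span_scale V.span_base) auto
    then show ?thesis using vec_sum[of v] by simp
  qed
  then show ?thesis by auto
qed

lemma indep_bas: "V.independent (bas ` S)"
  unfolding V.independent_explicit_module
proof (intro allI impI)
  fix t u v assume t: "finite t" "t \<subseteq> bas ` S" "(\<Sum>v\<in>t. sc (u v) v) = 0" "v \<in> t"
  then obtain j where j: "v = bas j" by auto
  have "lk (\<Sum>v\<in>t. sc (u v) v) j = u v"
  proof -
    have "lk (\<Sum>v\<in>t. sc (u v) v) j = (\<Sum>w\<in>t. u w * lk w j)" by (simp add: lookup_sum)
    also have "\<dots> = (\<Sum>w\<in>{v}. u w * lk w j)"
    proof (rule sum.mono_neutral_right)
      show "\<forall>w\<in>t - {v}. u w * lk w j = 0"
      proof
        fix w assume w: "w \<in> t - {v}"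
        then obtain j' where "w = bas j'" using t by auto
        with w j show "u w * lk w j = 0" by (auto simp: lookup_bas)
      qed
    qed (use t in auto)
    finally show ?thesis by (simp add: j lookup_bas)
  qed
  then show "u v = 0" using t by simp
qed

lemma vec_in_span_keys: "v \<in> V.span (bas ` keys v)"
proof -
  have "(\<Sum>i\<in>keys v. sc (lk v i) (bas i)) \<in> V.span (bas ` keys v)"
    by (intro V.span_sum V.span_scale V.span_base) auto
  then show ?thesis using vec_sum[of v] by simp
qed

lemma indep_Un:
  assumes "V.independent B1" "V.independent B2" "V.span B1 \<inter> V.span B2 \<subseteq> {0}"
  shows "V.independent (B1 \<union> B2)"
  unfolding V.independent_explicit_module
proof (intro allI impI)
  fix t u v assume t: "finite t" "t \<subseteq> B1 \<union> B2" "(\<Sum>v\<in>t. sc (u v) v) = 0" "v \<in> t"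
  let ?t1 = "t \<inter> B1" and ?t2 = "t - B1"
  have "(\<Sum>v\<in>t. sc (u v) v) = (\<Sum>v\<in>?t1. sc (u v) v) + (\<Sum>v\<in>?t2. sc (u v) v)"
    using t(1) by (rule sum.Int_Diff)
  then have eq: "(\<Sum>v\<in>?t1. sc (u v) v) = - (\<Sum>v\<in>?t2. sc (u v) v)"
    using t(3) by (simp add: eq_neg_iff_add_eq_0)
  have i1': "(\<Sum>v\<in>?t1. sc (u v) v) \<in> V.span ?t1"
    by (intro V.span_sum V.span_scale V.span_base) auto
  have "?t1 \<subseteq> B1" by blast
  then have i1: "(\<Sum>v\<in>?t1. sc (u v) v) \<in> V.span B1"
    by (rule subsetD[OF V.span_mono i1'])
  have i2': "(\<Sum>v\<in>?t2. sc (u v) v) \<in> V.span ?t2"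
    by (intro V.span_sum V.span_scale V.span_base) auto
  have "?t2 \<subseteq> B2" using t(2) by blast
  then have i2: "(\<Sum>v\<in>?t2. sc (u v) v) \<in> V.span B2"
    by (rule subsetD[OF V.span_mono i2'])
  have "(\<Sum>v\<in>?t1. sc (u v) v) \<in> V.span B2"
    using V.span_neg[OF i2] eq by simp
  with i1 assms(3) have z1: "(\<Sum>v\<in>?t1. sc (u v) v) = 0" by blast
  with eq have z2: "(\<Sum>v\<in>?t2. sc (u v) v) = 0" by simp
  show "u v = 0"
  proof (cases "v \<in> B1")
    case True
    then show ?thesis using V.independentD[OF assms(1) _ _ z1] t by auto
  next
    case False
    then show ?thesis using V.independentD[OF assms(2) _ _ z2] t by auto
  qed
qed

lemma indep_countable:
  assumes "V.independent (J :: 'k::field vec set)"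
  shows "countable J"
proof -
  have "J \<subseteq> (\<Union>F\<in>Collect finite. J \<inter> V.span (bas ` F))"
  proof
    fix v assume "v \<in> J"
    then show "v \<in> (\<Union>F\<in>Collect finite. J \<inter> V.span (bas ` F))"
      by (intro UN_I[of "keys v"]) (auto simp: vec_in_span_keys)
  qed
  moreover have "countable (\<Union>F\<in>Collect finite. J \<inter> V.span (bas ` F))"
  proof (rule countable_UN)
    show "countable (Collect (finite :: nat set \<Rightarrow> bool))" by (rule countable_Collect_finite)
    fix F :: "nat set" assume "F \<in> Collect finite"
    have ind: "V.independent (J \<inter> V.span (bas ` F))"
      by (rule V.independent_mono[OF assms]) auto
    have "finite (bas ` F)" using \<open>F \<in> Collect finite\<close> by simp
    from V.independent_span_bound[OF this ind]
    have "finite (J \<inter> V.span (bas ` F))" by auto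
    then show "countable (J \<inter> V.span (bas ` F))" by (rule countable_finite)
  qed
  ultimately show ?thesis using countable_subset by blast
qed

definition idx :: "'k::field vec \<Rightarrow> nat" where "idx = inv bas"

lemma idx_bas[simp]: "idx (bas j) = j"
  by (simp add: idx_def inv_f_f[OF bas_inj])

definition lmap :: "(nat \<Rightarrow> 'k::field vec) \<Rightarrow> 'k vec \<Rightarrow> 'k vec" where
  "lmap c = VV.construct (range bas) (\<lambda>b. c (idx b))"

lemma lin_lmap: "lin (lmap c)"
  unfolding lmap_def using VV.linear_construct[OF indep_bas[of UNIV]] by simp

lemma lmap_bas[simp]: "lmap c (bas j) = c j"
  unfolding lmap_def
  using VV.construct_basis[OF indep_bas[of UNIV], where b="bas j" and f="\<lambda>b. c (idx b)"] by simp

lemma lin_eq: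
  assumes "lin f" "lin g" "\<And>j. f (bas j) = g (bas j)"
  shows "f = g"
proof
  fix v show "f v = g v"
    using VV.linear_eq_on[OF assms(1,2), of v "range bas"] span_bas assms(3) by auto
qed

lemma lin_eq_on:
  assumes "lin f" "lin g" "V.span B = UNIV" "\<And>b. b \<in> B \<Longrightarrow> f b = g b"
  shows "f = g"
proof
  fix v show "f v = g v"
    using VV.linear_eq_on[OF assms(1,2), of v B] assms(3,4) by auto
qed

definition proj :: "nat set \<Rightarrow> 'k::field vec \<Rightarrow> 'k vec" where
  "proj S = lmap (\<lambda>j. if j \<in> S then bas j else 0)"

lemma lin_proj[simp]: "lin (proj S)"
  by (simp add: proj_def lin_lmap)

lemma proj_bas: "proj S (bas j) = (if j \<in> S then bas j else 0)"
  by (simp add: proj_def)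

lemma proj_range: "proj S (v :: 'k::field vec) \<in> V.span (bas ` S)"
proof -
  have "proj S v \<in> V.span ((\<lambda>b. (\<lambda>j. if j \<in> S then bas j else 0) (idx b)) ` range (bas :: nat \<Rightarrow> 'k vec))"
    unfolding proj_def lmap_def by (rule VV.construct_in_span[OF indep_bas[of UNIV]])
  also have "\<dots> \<subseteq> V.span (insert 0 (bas ` S))"
    by (rule V.span_mono) auto
  finally show ?thesis by simp
qed

lemma proj_id: "v \<in> V.span (bas ` S) \<Longrightarrow> proj S v = v"
proof -
  assume v: "v \<in> V.span (bas ` S)"
  have "\<And>b. b \<in> bas ` S \<Longrightarrow> proj S b = id b" by (auto simp: proj_bas)
  from VV.linear_eq_on[OF lin_proj V.linear_id v this] show ?thesis by simp
qed

lemma proj_zero: "v \<in> V.span (bas ` (- S)) \<Longrightarrow> proj S v = 0"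
proof -
  assume v: "v \<in> V.span (bas ` (- S))"
  have "\<And>b. b \<in> bas ` (- S) \<Longrightarrow> proj S b = (\<lambda>x. 0) b" by (auto simp: proj_bas)
  from VV.linear_eq_on[OF lin_proj VV.linear_zero v this] show ?thesis by simp
qed

lemma proj_proj: "proj S (proj T v) = proj (S \<inter> T) v"
proof -
  have "proj S \<circ> proj T = proj (S \<inter> T)"
    by (rule lin_eq) (auto simp: proj_bas Vector_Spaces.linear_compose[OF lin_proj lin_proj] VV.linear_0[OF lin_proj])
  then show ?thesis by (metis comp_apply)
qed

lemma span_disj: "V.span (bas ` S) \<inter> V.span (bas ` (- S)) \<subseteq> {0}"
proof
  fix x assume "x \<in> V.span (bas ` S) \<inter> V.span (bas ` (- S))"
  then have "proj S x = x" "proj S x = 0" using proj_id proj_zero by auto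
  then show "x \<in> {0}" by simp
qed

lemma bas_notin: "i \<notin> S \<Longrightarrow> (bas i :: 'k::field vec) \<notin> V.span (bas ` S)"
proof
  assume "i \<notin> S" and b: "(bas i :: 'k vec) \<in> V.span (bas ` S)"
  from proj_id[OF b] have "proj S (bas i) = (bas i :: 'k vec)" .
  with \<open>i \<notin> S\<close> show False by (simp add: proj_bas bas_nz)
qed


definition supp :: "nat set \<Rightarrow> ('k::field vec \<Rightarrow> 'k vec) \<Rightarrow> bool" where
  "supp T f \<longleftrightarrow> (\<forall>v. f (proj T v) = f v) \<and> (\<forall>v. proj T (f v) = f v)"

lemma span_sub_disj:
  assumes "B \<subseteq> V.span (bas ` S)"
  shows "V.span B \<inter> V.span (bas ` (- S)) \<subseteq> {0}"
proof -
  have "V.span B \<subseteq> V.span (bas ` S)"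
    using assms by (simp add: V.span_minimal)
  then show ?thesis using span_disj[of S] by blast
qed

lemma span_full:
  assumes "V.span (bas ` S) \<subseteq> V.span B"
  shows "V.span (B \<union> bas ` (- S)) = (UNIV :: 'k::field vec set)"
proof -
  have "range bas \<subseteq> V.span (B \<union> bas ` (- S))"
  proof
    fix x :: "'k vec" assume "x \<in> range bas"
    then obtain i where i: "x = bas i" by auto
    show "x \<in> V.span (B \<union> bas ` (- S))"
    proof (cases "i \<in> S")
      case True
      then have "x \<in> V.span B" using assms i V.span_base[of x "bas ` S"] by auto
      then show ?thesis using V.span_mono[of B "B \<union> bas ` (- S)"] by auto
    next
      case False
      then show ?thesis using i by (auto intro: V.span_base)
    qed
  qed
  then have "V.span (range bas) \<subseteq> V.span (B \<union> bas ` (- S))"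
    by (simp add: V.span_minimal)
  then show ?thesis using span_bas by auto
qed

lemma main:
  fixes f :: "'k::field vec \<Rightarrow> 'k vec"
  assumes lf: "lin f" and sf: "supp S f" and X: "infinite X" "X \<inter> S = {}"
  shows "\<exists>u w. lin u \<and> lin w \<and> supp (S \<union> X) u \<and> supp (S \<union> X) w \<and>
     (\<forall>v. u (w v) = proj (S \<union> X) v) \<and> (\<forall>v. w (u v) = proj (S \<union> X) v) \<and> (\<forall>v. f (u (f v)) = f v)"
proof -
  define T where "T = S \<union> X"
  define AS where "AS = V.span (bas ` S :: 'k vec set)"
  define AT where "AT = V.span (bas ` T :: 'k vec set)"
  have ASAT: "AS \<subseteq> AT" unfolding AS_def AT_def T_def by (rule V.span_mono) auto
  have fv_AS: "f v \<in> AS" for v using sf proj_range unfolding supp_def AS_def by metis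
  have fP: "f (proj S v) = f v" for v using sf supp_def by auto
  obtain \<beta> where \<beta>: "\<beta> \<subseteq> range f" "V.independent \<beta>" "range f \<subseteq> V.span \<beta>"
    using V.maximal_independent_subset[of "range f"] by blast
  have "\<forall>b\<in>\<beta>. \<exists>x. x \<in> AS \<and> f x = b"
  proof
    fix b assume "b \<in> \<beta>" then obtain v where "b = f v" using \<beta> by auto
    then show "\<exists>x. x \<in> AS \<and> f x = b" using fP proj_range AS_def by metis
  qed
  then obtain a where a: "\<And>b. b \<in> \<beta> \<Longrightarrow> a b \<in> AS" "\<And>b. b \<in> \<beta> \<Longrightarrow> f (a b) = b" by metis
  have \<beta>AS: "\<beta> \<subseteq> AS" using \<beta> fv_AS by auto
  obtain B1 where B1: "\<beta> \<subseteq> B1" "B1 \<subseteq> AS" "V.independent B1" "AS \<subseteq> V.span B1"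
    using V.maximal_independent_subset_extend[OF \<beta>AS \<beta>(2)] by blast
  define \<gamma> where "\<gamma> = B1 - \<beta>"
  obtain \<nu> where \<nu>: "\<nu> \<subseteq> {x \<in> AS. f x = 0}" "V.independent \<nu>" "{x \<in> AS. f x = 0} \<subseteq> V.span \<nu>"
    using V.maximal_independent_subset[of "{x \<in> AS. f x = 0}"] by blast
  define at where "at = VV.construct \<beta> a"
  have lat: "lin at" unfolding at_def by (rule VV.linear_construct[OF \<beta>(2)])
  have at_b: "b \<in> \<beta> \<Longrightarrow> at b = a b" for b unfolding at_def by (rule VV.construct_basis[OF \<beta>(2)])
  have f_at: "f (at y) = y" if y: "y \<in> V.span \<beta>" for y
  proof -
    have "\<And>b. b \<in> \<beta> \<Longrightarrow> (f \<circ> at) b = id b" using at_b a by simp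
    from VV.linear_eq_on[OF Vector_Spaces.linear_compose[OF lat lf] V.linear_id y this]
    show ?thesis by simp
  qed
  define A' where "A' = a ` \<beta>"
  have A'eq: "A' = at ` \<beta>" unfolding A'_def using at_b by auto
  have spanA': "V.span A' = at ` V.span \<beta>" unfolding A'eq by (rule VV.linear_span_image[OF lat])
  have A'AS: "A' \<subseteq> AS" using a A'_def by auto
  have indA': "V.independent A'"
  proof -
    have "inj_on at (V.span \<beta>)" using f_at by (metis inj_on_inverseI)
    then show ?thesis unfolding A'eq by (rule VV.linear_independent_injective_image[OF lat \<beta>(2)])
  qed
  have ker_span: "f x = 0" if x: "x \<in> V.span \<nu>" for x
  proof -
    have "\<And>b. b \<in> \<nu> \<Longrightarrow> f b = (\<lambda>x. 0) b" using \<nu> by auto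
    from VV.linear_eq_on[OF lf VV.linear_zero x this] show ?thesis by simp
  qed
  have D1: "V.independent (A' \<union> \<nu>)"
  proof (rule indep_Un[OF indA' \<nu>(2)])
    show "V.span A' \<inter> V.span \<nu> \<subseteq> {0}"
    proof
      fix x assume x: "x \<in> V.span A' \<inter> V.span \<nu>"
      then obtain y where y: "y \<in> V.span \<beta>" "x = at y" using spanA' by auto
      have "f x = 0" using x ker_span by auto
      then have "y = 0" using f_at y by simp
      then show "x \<in> {0}" using y VV.linear_0[OF lat] by simp
    qed
  qed
  have spanA'AS: "V.span A' \<subseteq> AS" using A'AS AS_def by (simp add: V.span_minimal)
  have AS_sub: "AS \<subseteq> V.span (A' \<union> \<nu>)"
  proof
    fix v assume v: "v \<in> AS"
    have fvb: "f v \<in> V.span \<beta>" using \<beta> by auto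
    define v' where "v' = at (f v)"
    have v'A: "v' \<in> V.span A'" using spanA' fvb v'_def by auto
    have v'AS: "v' \<in> AS" using v'A spanA'AS by auto
    have "f (v - v') = 0" using f_at[OF fvb] VV.linear_diff[OF lf] v'_def by simp
    moreover have "v - v' \<in> AS" using v v'AS AS_def V.span_diff by auto
    ultimately have "v - v' \<in> V.span \<nu>" using \<nu>(3) by auto
    then have "v' + (v - v') \<in> V.span (A' \<union> \<nu>)"
      using v'A V.span_add V.span_mono[of A' "A' \<union> \<nu>"] V.span_mono[of \<nu> "A' \<union> \<nu>"] by blast
    then show "v \<in> V.span (A' \<union> \<nu>)" by simp
  qed
  define E' where "E' = (bas ` (- S) :: 'k vec set)"
  have Cind: "V.independent (B1 \<union> E')"
    unfolding E'_def
    by (rule indep_Un[OF B1(3) indep_bas], rule span_sub_disj) (use B1 AS_def in auto)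
  have A'\<nu>AS: "A' \<union> \<nu> \<subseteq> AS" using A'AS \<nu> by auto
  have Dind: "V.independent (A' \<union> \<nu> \<union> E')"
    unfolding E'_def
    by (rule indep_Un[OF D1 indep_bas], rule span_sub_disj) (use A'\<nu>AS AS_def in auto)
  have spanC: "V.span (B1 \<union> E') = UNIV"
    unfolding E'_def by (rule span_full) (use B1 AS_def in auto)
  have spanD: "V.span (A' \<union> \<nu> \<union> E') = UNIV"
    unfolding E'_def by (rule span_full) (use AS_sub AS_def in auto)
  define G where "G = \<gamma> \<union> bas ` X"
  define N where "N = \<nu> \<union> bas ` X"
  have infX: "infinite (bas ` X :: 'k vec set)"
    using X(1) finite_imageD inj_on_subset[OF bas_inj] by blast
  have cX: "countable (bas ` X :: 'k vec set)" by simp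
  have cG: "countable G" unfolding G_def \<gamma>_def
    using indep_countable[OF V.independent_mono[OF B1(3)]] cX by auto
  have cN: "countable N" unfolding N_def using indep_countable[OF \<nu>(2)] cX by auto
  obtain e1 :: "'k vec \<Rightarrow> nat" where e1: "bij_betw e1 G UNIV"
    using countableE_infinite[OF cG] infX G_def by (metis finite_Un)
  obtain e2 :: "'k vec \<Rightarrow> nat" where e2: "bij_betw e2 N UNIV"
    using countableE_infinite[OF cN] infX N_def by (metis finite_Un)
  define h where "h = inv_into N e2 \<circ> e1"
  have hb: "bij_betw h G N" unfolding h_def
    by (rule bij_betw_trans[OF e1 bij_betw_inv_into[OF e2]])
  have basX: "bas ` X \<inter> AS = {}" using bas_notin X(2) AS_def by blast
  have basnT: "bas ` (- T) \<inter> AT = {}" using bas_notin AT_def by blast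
  have \<beta>G: "\<beta> \<inter> G = {}" using basX \<beta>AS unfolding G_def \<gamma>_def by blast
  have zero\<beta>: "0 \<notin> \<beta>" using \<beta>(2) V.dependent_zero by blast
  have A'N: "A' \<inter> N = {}"
  proof -
    have "A' \<inter> \<nu> = {}"
    proof (rule ccontr)
      assume "A' \<inter> \<nu> \<noteq> {}"
      then obtain b where b: "b \<in> \<beta>" "a b \<in> \<nu>" unfolding A'_def by auto
      then have "f (a b) = 0" using \<nu> by auto
      then show False using a(2)[OF b(1)] b(1) zero\<beta> by simp
    qed
    then show ?thesis using basX A'AS unfolding N_def by blast
  qed
  have GT: "G \<subseteq> AT" unfolding G_def \<gamma>_def AT_def T_def using B1 ASAT AS_def AT_def T_def
    by (auto intro: V.span_base)
  have NT: "N \<subseteq> AT" unfolding N_def using \<nu> ASAT AT_def T_def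
    by (auto intro: V.span_base)
  have \<beta>T: "\<beta> \<subseteq> AT" using \<beta>AS ASAT by auto
  have A'T: "A' \<subseteq> AT" using A'AS ASAT by auto
  have compl: "- S = X \<union> - T" using X(2) T_def by auto
  have Ceq: "B1 \<union> E' = \<beta> \<union> G \<union> bas ` (- T)"
    unfolding E'_def G_def \<gamma>_def compl using B1(1) by auto
  have Deq: "A' \<union> \<nu> \<union> E' = A' \<union> N \<union> bas ` (- T)"
    unfolding E'_def N_def compl by auto
  have proj_AT: "x \<in> AT \<Longrightarrow> proj T x = x" for x using proj_id AT_def by metis
  have proj_nT: "x \<in> bas ` (- T) \<Longrightarrow> proj T x = 0" for x by (auto simp: proj_bas)
  define uc where "uc c = (if c \<in> \<beta> then a c else if c \<in> G then h c else 0)" for c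
  define wc where "wc d = (if d \<in> A' then f d else if d \<in> N then inv_into G h d else 0)" for d
  define u where "u = VV.construct (B1 \<union> E') uc"
  define w where "w = VV.construct (A' \<union> \<nu> \<union> E') wc"
  have lu: "lin u" unfolding u_def by (rule VV.linear_construct[OF Cind])
  have lw: "lin w" unfolding w_def by (rule VV.linear_construct[OF Dind])
  have u_c: "c \<in> B1 \<union> E' \<Longrightarrow> u c = uc c" for c unfolding u_def by (rule VV.construct_basis[OF Cind])
  have w_d: "d \<in> A' \<union> \<nu> \<union> E' \<Longrightarrow> w d = wc d" for d unfolding w_def by (rule VV.construct_basis[OF Dind])
  have hG: "c \<in> G \<Longrightarrow> h c \<in> N" for c using hb bij_betwE by blast
  have hinv1: "d \<in> N \<Longrightarrow> h (inv_into G h d) = d" for d using hb by (simp add: bij_betw_def f_inv_into_f)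
  have hinv2: "c \<in> G \<Longrightarrow> inv_into G h (h c) = c" for c using hb by (simp add: bij_betw_def inv_into_f_f)
  have hinvG: "d \<in> N \<Longrightarrow> inv_into G h d \<in> G" for d using hb by (metis bij_betw_def inv_into_into)
  have uw: "u \<circ> w = proj T"
  proof (rule lin_eq_on[OF Vector_Spaces.linear_compose[OF lw lu] lin_proj spanD])
    fix d assume d: "d \<in> A' \<union> \<nu> \<union> E'"
    then consider (inA) "d \<in> A'" | (n) "d \<in> N" "d \<notin> A'" | (o) "d \<in> bas ` (- T)" "d \<notin> A'" "d \<notin> N"
      unfolding Deq by blast
    then show "(u \<circ> w) d = proj T d"
    proof cases
      case inA
      then obtain b where b: "b \<in> \<beta>" "d = a b" unfolding A'_def by auto
      have "w d = b" using w_d[OF d] inA b a(2)[OF b(1)] unfolding wc_def by simp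
      moreover have "u b = d" using u_c[of b] b B1(1) unfolding uc_def by auto
      ultimately show ?thesis using proj_AT A'T inA by auto
    next
      case n
      have "w d = inv_into G h d" using w_d[OF d] n unfolding wc_def by simp
      moreover have "u (inv_into G h d) = d"
        using u_c[of "inv_into G h d"] hinvG[OF n(1)] \<beta>G hinv1[OF n(1)] Ceq unfolding uc_def by auto
      ultimately show ?thesis using proj_AT NT n by auto
    next
      case o
      have "w d = 0" using w_d[OF d] o unfolding wc_def by simp
      then show ?thesis using proj_nT[OF o(1)] VV.linear_0[OF lu] by simp
    qed
  qed
  have wu: "w \<circ> u = proj T"
  proof (rule lin_eq_on[OF Vector_Spaces.linear_compose[OF lu lw] lin_proj spanC])
    fix c assume c: "c \<in> B1 \<union> E'"
    then consider (b) "c \<in> \<beta>" | (g) "c \<in> G" "c \<notin> \<beta>" | (o) "c \<in> bas ` (- T)" "c \<notin> \<beta>" "c \<notin> G"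
      unfolding Ceq by blast
    then show "(w \<circ> u) c = proj T c"
    proof cases
      case b
      have "u c = a c" using u_c[OF c] b unfolding uc_def by simp
      moreover have "a c \<in> A'" using b A'_def by auto
      moreover then have "w (a c) = c" using w_d[of "a c"] a(2)[OF b] unfolding wc_def by auto
      ultimately show ?thesis using proj_AT \<beta>T b by auto
    next
      case g
      have "u c = h c" using u_c[OF c] g unfolding uc_def by simp
      moreover have "w (h c) = c" using w_d[of "h c"] hG[OF g(1)] A'N hinv2[OF g(1)] Deq
        unfolding wc_def by auto
      ultimately show ?thesis using proj_AT GT g by auto
    next
      case o
      have "u c = 0" using u_c[OF c] o unfolding uc_def by simp
      then show ?thesis using proj_nT[OF o(1)] VV.linear_0[OF lw] by simp
    qed
  qed
  have fuf: "f (u (f v)) = f v" for v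
  proof -
    have "\<And>b. b \<in> \<beta> \<Longrightarrow> (f \<circ> u) b = id b"
      using u_c B1(1) a(2) unfolding uc_def by auto
    from VV.linear_eq_on[OF Vector_Spaces.linear_compose[OF lu lf] V.linear_id _ this, of "f v"] \<beta>(3)
    show ?thesis by auto
  qed
  have uT1: "u \<circ> proj T = u"
  proof (rule lin_eq_on[OF Vector_Spaces.linear_compose[OF lin_proj lu] lu spanC])
    fix c assume c: "c \<in> B1 \<union> E'"
    then consider (b) "c \<in> \<beta> \<union> G" | (o) "c \<in> bas ` (- T)" "c \<notin> \<beta>" "c \<notin> G"
      unfolding Ceq by blast
    then show "(u \<circ> proj T) c = u c"
    proof cases
      case b then show ?thesis using proj_AT \<beta>T GT by auto
    next
      case o then show ?thesis using u_c[OF c] proj_nT[OF o(1)] VV.linear_0[OF lu] unfolding uc_def by simp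
    qed
  qed
  have uT2: "proj T \<circ> u = u"
  proof (rule lin_eq_on[OF Vector_Spaces.linear_compose[OF lu lin_proj] lu spanC])
    fix c assume c: "c \<in> B1 \<union> E'"
    then consider (b) "c \<in> \<beta>" | (g) "c \<in> G" "c \<notin> \<beta>" | (o) "c \<in> bas ` (- T)" "c \<notin> \<beta>" "c \<notin> G"
      unfolding Ceq by blast
    then show "(proj T \<circ> u) c = u c"
    proof cases
      case b then show ?thesis using u_c[OF c] proj_AT A'T A'_def unfolding uc_def by auto
    next
      case g then show ?thesis using u_c[OF c] proj_AT NT hG unfolding uc_def by auto
    next
      case o then show ?thesis using u_c[OF c] VV.linear_0[OF lin_proj] unfolding uc_def by simp
    qed
  qed
  have wT1: "w \<circ> proj T = w"
  proof (rule lin_eq_on[OF Vector_Spaces.linear_compose[OF lin_proj lw] lw spanD])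
    fix d assume d: "d \<in> A' \<union> \<nu> \<union> E'"
    then consider (b) "d \<in> A' \<union> N" | (o) "d \<in> bas ` (- T)" "d \<notin> A'" "d \<notin> N"
      unfolding Deq by blast
    then show "(w \<circ> proj T) d = w d"
    proof cases
      case b then show ?thesis using proj_AT A'T NT by auto
    next
      case o then show ?thesis using w_d[OF d] proj_nT[OF o(1)] VV.linear_0[OF lw] unfolding wc_def by simp
    qed
  qed
  have wT2: "proj T \<circ> w = w"
  proof (rule lin_eq_on[OF Vector_Spaces.linear_compose[OF lw lin_proj] lw spanD])
    fix d assume d: "d \<in> A' \<union> \<nu> \<union> E'"
    then consider (inA) "d \<in> A'" | (n) "d \<in> N" "d \<notin> A'" | (o) "d \<in> bas ` (- T)" "d \<notin> A'" "d \<notin> N"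
      unfolding Deq by blast
    then show "(proj T \<circ> w) d = w d"
    proof cases
      case inA
      then obtain b where b: "b \<in> \<beta>" "d = a b" unfolding A'_def by auto
      have "w d = b" using w_d[OF d] inA b a(2)[OF b(1)] unfolding wc_def by simp
      then show ?thesis using proj_AT \<beta>T b by auto
    next
      case n then show ?thesis using w_d[OF d] proj_AT GT hinvG unfolding wc_def by auto
    next
      case o then show ?thesis using w_d[OF d] VV.linear_0[OF lin_proj] unfolding wc_def by simp
    qed
  qed
  have "supp T u" unfolding supp_def using uT1 uT2 by (metis comp_apply)
  moreover have "supp T w" unfolding supp_def using wT1 wT2 by (metis comp_apply)
  ultimately show ?thesis unfolding T_def[symmetric]
    using lu lw uw wu fuf by (metis comp_apply)
qed



definition Sn :: "nat \<Rightarrow> nat set" where "Sn n = {i. fst (prod_decode i) < n}"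

lemma Sn_mono: "n \<le> m \<Longrightarrow> Sn n \<subseteq> Sn m"
  unfolding Sn_def by auto

definition R0 :: "('k::field vec \<Rightarrow> 'k vec) set" where
  "R0 = {f. lin f \<and> (\<exists>n. supp (Sn n) f)}"

lemma R0_lin[simp]: "f \<in> R0 \<Longrightarrow> lin f"
  by (simp add: R0_def)

lemma supp_mono:
  assumes "S \<subseteq> T" "supp S f"
  shows "supp T f"
  unfolding supp_def
proof (intro conjI allI)
  fix v
  have "f (proj T v) = f (proj S (proj T v))" using assms(2) supp_def by metis
  also have "\<dots> = f (proj S v)" using assms(1) by (simp add: proj_proj Int_absorb2)
  also have "\<dots> = f v" using assms(2) supp_def by metis
  finally show "f (proj T v) = f v" .
  have "proj T (f v) = proj T (proj S (f v))" using assms(2) supp_def by metis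
  also have "\<dots> = proj S (f v)" using assms(1) by (simp add: proj_proj Int_absorb1)
  also have "\<dots> = f v" using assms(2) supp_def by metis
  finally show "proj T (f v) = f v" .
qed

lemma R0_common:
  assumes "f \<in> R0" "g \<in> R0"
  obtains n where "supp (Sn n) f" "supp (Sn n) g"
proof -
  obtain n m where "supp (Sn n) f" "supp (Sn m) g" using assms unfolding R0_def by blast
  then show ?thesis using that[of "max n m"] supp_mono Sn_mono
    by (metis max.cobounded1 max.cobounded2)
qed

lemma lin_add[simp]: "lin f \<Longrightarrow> lin g \<Longrightarrow> lin (\<lambda>v. f v + g v)"
  by (rule VV.linear_compose_add)
lemma lin_neg[simp]: "lin f \<Longrightarrow> lin (\<lambda>v. - f v)"
  by (rule VV.linear_compose_neg)
lemma lin_sc[simp]: "lin f \<Longrightarrow> lin (\<lambda>v. sc c (f v))"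
  by (rule VV.linear_compose_scale_right)
lemma lin_comp[simp]: "lin f \<Longrightarrow> lin g \<Longrightarrow> lin (f \<circ> g)"
  by (rule Vector_Spaces.linear_compose)
lemma lin_zero[simp]: "lin (\<lambda>v. 0)"
  by (rule VV.linear_zero)

lemma R0_add[simp]: "f \<in> R0 \<Longrightarrow> g \<in> R0 \<Longrightarrow> (\<lambda>v. f v + g v) \<in> R0"
proof -
  assume f: "f \<in> R0" and g: "g \<in> R0"
  then obtain n where n: "supp (Sn n) f" "supp (Sn n) g" by (rule R0_common)
  have "supp (Sn n) (\<lambda>v. f v + g v)"
    using n unfolding supp_def by (simp add: VV.linear_add[OF lin_proj])
  then show ?thesis using f g R0_def by auto
qed

lemma R0_comp[simp]: "f \<in> R0 \<Longrightarrow> g \<in> R0 \<Longrightarrow> f \<circ> g \<in> R0"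
proof -
  assume f: "f \<in> R0" and g: "g \<in> R0"
  then obtain n where n: "supp (Sn n) f" "supp (Sn n) g" by (rule R0_common)
  have "supp (Sn n) (f \<circ> g)"
    using n unfolding supp_def by simp
  then show ?thesis using f g R0_def by auto
qed

lemma R0_sc[simp]: "f \<in> R0 \<Longrightarrow> (\<lambda>v. sc c (f v)) \<in> R0"
proof -
  assume f: "f \<in> R0"
  then obtain n where n: "supp (Sn n) f" using R0_def by auto
  have "supp (Sn n) (\<lambda>v. sc c (f v))"
    using n unfolding supp_def by (simp add: VV.linear_scale[OF lin_proj])
  then show ?thesis using f R0_def by auto
qed

lemma R0_neg[simp]: "f \<in> R0 \<Longrightarrow> (\<lambda>v. - f v) \<in> R0"
proof -
  assume f: "f \<in> R0"
  then obtain n where n: "supp (Sn n) f" using R0_def by auto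
  have "supp (Sn n) (\<lambda>v. - f v)"
    using n unfolding supp_def by (simp add: VV.linear_neg[OF lin_proj])
  then show ?thesis using f R0_def by auto
qed

lemma R0_zero[simp]: "(\<lambda>v. 0) \<in> R0"
proof -
  have "supp (Sn 0) (\<lambda>v. 0 :: 'k::field vec)"
    unfolding supp_def by (simp add: VV.linear_0[OF lin_proj])
  then show ?thesis using R0_def by auto
qed

definition mat :: "('k::field vec \<Rightarrow> 'k vec) \<Rightarrow> nat \<Rightarrow> nat \<Rightarrow> 'k" where
  "mat f = (\<lambda>i j. lk (f (bas j)) i)"

lemma mat_inj: "inj_on mat {f :: 'k::field vec \<Rightarrow> 'k vec. lin f}"
proof (rule inj_onI)
  fix f g :: "'k vec \<Rightarrow> 'k vec"
  assume f: "f \<in> {f. lin f}" and g: "g \<in> {f. lin f}" and e: "mat f = mat g"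
  show "f = g"
  proof (rule lin_eq)
    show "lin f" "lin g" using f g by auto
    fix j show "f (bas j) = g (bas j)"
      by (rule poly_mapping_eqI) (metis e mat_def)
  qed
qed

lemma mat_eq_iff: "lin f \<Longrightarrow> lin g \<Longrightarrow> mat f = mat g \<longleftrightarrow> f = g"
  using mat_inj by (auto dest: inj_onD)

definition Psi :: "(nat \<Rightarrow> nat \<Rightarrow> 'k) \<Rightarrow> ('k::field vec \<Rightarrow> 'k vec)" where
  "Psi x = the_inv_into {f. lin f} mat x"

lemma Psi_mat[simp]: "lin f \<Longrightarrow> Psi (mat f) = f"
  unfolding Psi_def by (rule the_inv_into_f_f[OF mat_inj]) simp

definition Alg :: "('k::field, nat \<Rightarrow> nat \<Rightarrow> 'k) kalg" where
  "Alg = \<lparr>carr = mat ` R0, add = (\<lambda>x y. mat (\<lambda>v. Psi x v + Psi y v)),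
          mul = (\<lambda>x y. mat (Psi x \<circ> Psi y)), zer = mat (\<lambda>v. 0),
          smul = (\<lambda>c x. mat (\<lambda>v. sc c (Psi x v)))\<rparr>"

lemma carr_Alg: "carr Alg = mat ` R0" by (simp add: Alg_def)
lemma add_Alg[simp]: "lin f \<Longrightarrow> lin g \<Longrightarrow> add Alg (mat f) (mat g) = mat (\<lambda>v. f v + g v)"
  by (simp add: Alg_def)
lemma mul_Alg[simp]: "lin f \<Longrightarrow> lin g \<Longrightarrow> mul Alg (mat f) (mat g) = mat (f \<circ> g)"
  by (simp add: Alg_def)
lemma smul_Alg[simp]: "lin f \<Longrightarrow> smul Alg c (mat f) = mat (\<lambda>v. sc c (f v))"
  by (simp add: Alg_def)
lemma zer_Alg: "zer Alg = mat (\<lambda>v. 0)"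
  by (simp add: Alg_def)

lemma ball_mat: "(\<forall>x\<in>mat ` R0. P x) \<longleftrightarrow> (\<forall>f\<in>R0. P (mat f))"
  by auto

lemma is_kalg: "is_kalgebra (Alg :: ('k::field, nat \<Rightarrow> nat \<Rightarrow> 'k) kalg)"
  unfolding is_kalgebra_def carr_Alg zer_Alg ball_mat
proof (intro conjI allI ballI)
  show "mat (\<lambda>v. 0) \<in> mat ` (R0 :: ('k vec \<Rightarrow> 'k vec) set)" by simp
  fix f g h :: "'k vec \<Rightarrow> 'k vec" and a b :: 'k
  assume f: "f \<in> R0" and g: "g \<in> R0" and h: "h \<in> R0"
  have [simp]: "lin f" "lin g" "lin h" using f g h by auto
  show "add Alg (mat f) (mat g) \<in> mat ` R0" using f g by simp
  show "mul Alg (mat f) (mat g) \<in> mat ` R0" using f g by simp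
  show "smul Alg a (mat f) \<in> mat ` R0" using f by simp
  show "add Alg (add Alg (mat f) (mat g)) (mat h) = add Alg (mat f) (add Alg (mat g) (mat h))"
    by (simp add: add.assoc)
  show "add Alg (mat f) (mat g) = add Alg (mat g) (mat f)"
    by (simp add: add.commute)
  show "add Alg (mat (\<lambda>v. 0)) (mat f) = mat f" by simp
  show "\<exists>y\<in>mat ` R0. add Alg (mat f) y = mat (\<lambda>v. 0)"
    by (rule bexI[of _ "mat (\<lambda>v. - f v)"]) (use f in simp_all)
  show "mul Alg (mul Alg (mat f) (mat g)) (mat h) = mul Alg (mat f) (mul Alg (mat g) (mat h))"
    by (simp add: comp_assoc)
  show "mul Alg (mat f) (add Alg (mat g) (mat h)) = add Alg (mul Alg (mat f) (mat g)) (mul Alg (mat f) (mat h))"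
  proof -
    have "f \<circ> (\<lambda>v. g v + h v) = (\<lambda>v. (f \<circ> g) v + (f \<circ> h) v)"
      by (auto simp: VV.linear_add)
    then show ?thesis by simp
  qed
  show "mul Alg (add Alg (mat f) (mat g)) (mat h) = add Alg (mul Alg (mat f) (mat h)) (mul Alg (mat g) (mat h))"
  proof -
    have "(\<lambda>v. f v + g v) \<circ> h = (\<lambda>v. (f \<circ> h) v + (g \<circ> h) v)"
      by auto
    then show ?thesis by simp
  qed
  show "smul Alg (a + b) (mat f) = add Alg (smul Alg a (mat f)) (smul Alg b (mat f))"
    by (simp add: V.scale_left_distrib)
  show "smul Alg a (add Alg (mat f) (mat g)) = add Alg (smul Alg a (mat f)) (smul Alg a (mat g))"
    by (simp add: V.scale_right_distrib)
  show "smul Alg (a * b) (mat f) = smul Alg a (smul Alg b (mat f))"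
    by simp
  show "smul Alg 1 (mat f) = mat f" by simp
  show "smul Alg a (mul Alg (mat f) (mat g)) = mul Alg (smul Alg a (mat f)) (mat g)"
  proof -
    have "(\<lambda>v. sc a (f v)) \<circ> g = (\<lambda>v. sc a ((f \<circ> g) v))"
      by auto
    then show ?thesis by simp
  qed
  show "smul Alg a (mul Alg (mat f) (mat g)) = mul Alg (mat f) (smul Alg a (mat g))"
  proof -
    have "f \<circ> (\<lambda>v. sc a (g v)) = (\<lambda>v. sc a ((f \<circ> g) v))"
      by (auto simp: VV.linear_scale)
    then show ?thesis by simp
  qed
qed


lemma carrE:
  assumes "x \<in> carr Alg"
  shows "lin (Psi x)" "mat (Psi x) = x" "Psi x \<in> R0"
proof -
  obtain f where f: "f \<in> R0" "x = mat f" using assms carr_Alg by auto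
  then show "lin (Psi x)" "mat (Psi x) = x" "Psi x \<in> R0" by auto
qed

lemma mul_Alg': "mul Alg x y = mat (Psi x \<circ> Psi y)" by (simp add: Alg_def)

lemma mat_eqD: "lin f \<Longrightarrow> lin g \<Longrightarrow> mat f = mat g \<Longrightarrow> f = g"
  using mat_eq_iff by blast

lemma proj_idem: "proj T \<circ> proj T = proj T"
  by (rule ext) (simp add: proj_proj)

lemma supp_proj: "supp T (proj T)"
  unfolding supp_def by (simp add: proj_proj)

lemma proj_R0: "proj (Sn n) \<in> R0"
  unfolding R0_def using supp_proj[of "Sn n"] by auto

lemma supp_R0: "lin g \<Longrightarrow> supp (Sn n) g \<Longrightarrow> g \<in> R0"
  using R0_def by auto

lemma corner_mem:
  assumes "lin g" "supp (Sn n) g"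
  shows "mat g \<in> corner Alg (mat (proj (Sn n)))"
proof -
  have "proj (Sn n) \<circ> (g \<circ> proj (Sn n)) = g"
    using assms(2) unfolding supp_def by auto
  then have "mat g = mul Alg (mat (proj (Sn n))) (mul Alg (mat g) (mat (proj (Sn n))))"
    using assms by simp
  moreover have "mat g \<in> carr Alg" using assms supp_R0 carr_Alg by auto
  ultimately show ?thesis unfolding corner_def by blast
qed

lemma Sn_inf: "infinite (Sn (Suc n) - Sn n)"
proof -
  have "range (\<lambda>m. prod_encode (n, m)) \<subseteq> Sn (Suc n) - Sn n"
    by (auto simp: Sn_def)
  moreover have "inj (\<lambda>m. prod_encode (n, m))"
    by (rule injI) (simp add: prod_encode_eq)
  then have "infinite (range (\<lambda>m. prod_encode (n, m)))"
    by (rule range_inj_infinite)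
  ultimately show ?thesis using infinite_super by blast
qed

lemma elw: "elementwise_locally_unit_regular (Alg :: ('k::field, nat \<Rightarrow> nat \<Rightarrow> 'k) kalg)"
  unfolding elementwise_locally_unit_regular_def carr_Alg ball_mat
proof
  fix f :: "'k vec \<Rightarrow> 'k vec" assume f: "f \<in> R0"
  then obtain n where n: "supp (Sn n) f" and lf: "lin f" unfolding R0_def by blast
  define T where "T = Sn (Suc n)"
  have SnS: "Sn n \<subseteq> Sn (Suc n)" by (rule Sn_mono) simp
  have SX: "Sn n \<union> (Sn (Suc n) - Sn n) = T" unfolding T_def using SnS by blast
  obtain u w where uw: "lin u" "lin w" "supp T u" "supp T w" "\<forall>v. u (w v) = proj T v"
     "\<forall>v. w (u v) = proj T v" "\<forall>v. f (u (f v)) = f v"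
  proof -
    have disj: "(Sn (Suc n) - Sn n) \<inter> Sn n = {}" by blast
    show ?thesis using main[OF lf n Sn_inf[of n] disj, unfolded SX] that by blast
  qed
  have fT: "supp T f" unfolding T_def by (rule supp_mono[OF SnS n])
  show "\<exists>e\<in>mat ` R0. mul Alg e e = e \<and> mat f \<in> corner Alg e \<and>
          (\<exists>u. is_unit_in Alg (corner Alg e) e u \<and> mul Alg (mul Alg (mat f) u) (mat f) = mat f)"
  proof (intro bexI[of _ "mat (proj T)"] conjI exI)
    show "mat (proj T) \<in> mat ` R0" using proj_R0 T_def by auto
    show "mul Alg (mat (proj T)) (mat (proj T)) = mat (proj T)" by (simp add: proj_idem)
    show "mat f \<in> corner Alg (mat (proj T))" using corner_mem[OF lf fT[unfolded T_def]] T_def by simp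
    have uc: "mat u \<in> corner Alg (mat (proj T))" using corner_mem[OF uw(1) uw(3)[unfolded T_def]] T_def by simp
    have wc: "mat w \<in> corner Alg (mat (proj T))" using corner_mem[OF uw(2) uw(4)[unfolded T_def]] T_def by simp
    have "u \<circ> w = proj T" "w \<circ> u = proj T" using uw(5,6) by (simp_all add: fun_eq_iff)
    then have "mul Alg (mat u) (mat w) = mat (proj T)" "mul Alg (mat w) (mat u) = mat (proj T)"
      using uw(1,2) by simp_all
    then show "is_unit_in Alg (corner Alg (mat (proj T))) (mat (proj T)) (mat u)"
      unfolding is_unit_in_def using uc wc by blast
    have "f \<circ> u \<circ> f = f" using uw(7) by (simp add: fun_eq_iff)
    then show "mul Alg (mul Alg (mat f) (mat u)) (mat f) = mat f"
      using lf uw(1) by simp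
  qed
qed


definition s0 :: "'k::field vec \<Rightarrow> 'k vec" where
  "s0 = lmap (\<lambda>j. if j \<in> Sn 1 then bas (prod_encode (0, snd (prod_decode j) + 1)) else 0)"

definition t0 :: "'k::field vec \<Rightarrow> 'k vec" where
  "t0 = lmap (\<lambda>j. if j \<in> Sn 1 \<and> snd (prod_decode j) \<noteq> 0
                   then bas (prod_encode (0, snd (prod_decode j) - 1)) else 0)"

lemma Sn1_iff: "j \<in> Sn 1 \<longleftrightarrow> fst (prod_decode j) = 0"
  by (simp add: Sn_def)

lemma enc_in_Sn1[simp]: "prod_encode (0, m) \<in> Sn (Suc 0)"
  by (simp add: Sn_def prod_encode_inverse)

lemma enc_snd: "j \<in> Sn 1 \<Longrightarrow> prod_encode (0, snd (prod_decode j)) = j"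
  by (metis Sn1_iff prod.collapse prod_decode_inverse)

lemma snd_enc[simp]: "snd (prod_decode (prod_encode (0, m))) = m"
  by (simp add: prod_encode_inverse)

lemma lin_s0[simp]: "lin s0" by (simp add: s0_def lin_lmap)
lemma lin_t0[simp]: "lin t0" by (simp add: t0_def lin_lmap)

lemma s0_bas: "s0 (bas j) = (if j \<in> Sn 1 then bas (prod_encode (0, snd (prod_decode j) + 1)) else 0)"
  by (simp add: s0_def)
lemma t0_bas: "t0 (bas j) = (if j \<in> Sn 1 \<and> snd (prod_decode j) \<noteq> 0
                   then bas (prod_encode (0, snd (prod_decode j) - 1)) else 0)"
  by (simp add: t0_def)

lemma ts0: "t0 \<circ> s0 = proj (Sn 1)"
proof (rule lin_eq)
  show "lin (t0 \<circ> s0)" by simp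
  show "lin (proj (Sn 1))" by simp
  fix j
  show "(t0 \<circ> s0) (bas j) = proj (Sn 1) (bas j)"
    by (simp add: s0_bas t0_bas proj_bas enc_snd VV.linear_0)
qed

lemma supp_s0: "supp (Sn 1) s0"
proof -
  have "s0 \<circ> proj (Sn 1) = s0"
    by (rule lin_eq) (simp_all add: s0_bas proj_bas VV.linear_0)
  moreover have "proj (Sn 1) \<circ> s0 = s0"
    by (rule lin_eq) (simp_all add: s0_bas proj_bas VV.linear_0)
  ultimately show ?thesis unfolding supp_def by (metis comp_apply)
qed

lemma supp_t0: "supp (Sn 1) t0"
proof -
  have "t0 \<circ> proj (Sn 1) = t0"
    by (rule lin_eq) (simp_all add: t0_bas proj_bas VV.linear_0)
  moreover have "proj (Sn 1) \<circ> t0 = t0"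
    by (rule lin_eq) (simp_all add: t0_bas proj_bas VV.linear_0)
  ultimately show ?thesis unfolding supp_def by (metis comp_apply)
qed

lemma st0_ne: "s0 (t0 (bas (prod_encode (0, 0)))) \<noteq> proj (Sn 1) (bas (prod_encode (0, 0)))"
  by (simp add: t0_bas proj_bas VV.linear_0 bas_nz)

lemma sc_m1[simp]: "sc (-1) x = - x"
  by (rule poly_mapping_eqI) simp



lemma lin_diff[simp]: "lin f \<Longrightarrow> lin g \<Longrightarrow> lin (\<lambda>v. f v - g v)"
  by (rule VV.linear_compose_sub)

lemma sub_carr: "is_subalgebra A S \<Longrightarrow> S \<subseteq> carr A"
  unfolding is_subalgebra_def by (elim conjE)
lemma sub_add: "is_subalgebra A S \<Longrightarrow> x \<in> S \<Longrightarrow> y \<in> S \<Longrightarrow> add A x y \<in> S"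
  unfolding is_subalgebra_def by (elim conjE) simp
lemma sub_mul: "is_subalgebra A S \<Longrightarrow> x \<in> S \<Longrightarrow> y \<in> S \<Longrightarrow> mul A x y \<in> S"
  unfolding is_subalgebra_def by (elim conjE) simp
lemma sub_smul: "is_subalgebra A S \<Longrightarrow> x \<in> S \<Longrightarrow> smul A c x \<in> S"
  unfolding is_subalgebra_def by (elim conjE) simp
lemma id_mem: "is_identity_of A S e \<Longrightarrow> e \<in> S"
  unfolding is_identity_of_def by (elim conjE)
lemma id_L: "is_identity_of A S e \<Longrightarrow> x \<in> S \<Longrightarrow> mul A e x = x"
  unfolding is_identity_of_def by (elim conjE) simp
lemma id_R: "is_identity_of A S e \<Longrightarrow> x \<in> S \<Longrightarrow> mul A x e = x"
  unfolding is_identity_of_def by (elim conjE) simp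

lemma not_lur: "\<not> locally_unit_regular (Alg :: ('k::field, nat \<Rightarrow> nat \<Rightarrow> 'k) kalg)"
proof
  assume lur: "locally_unit_regular (Alg :: ('k, nat \<Rightarrow> nat \<Rightarrow> 'k) kalg)"
  define F0 where "F0 = {mat s0, mat t0 :: nat \<Rightarrow> nat \<Rightarrow> 'k}"
  have fin: "finite F0" by (simp add: F0_def)
  have sub: "F0 \<subseteq> carr Alg"
    using supp_R0[OF lin_s0 supp_s0] supp_R0[OF lin_t0 supp_t0] carr_Alg F0_def by auto
  have "finite F0 \<and> F0 \<subseteq> carr Alg \<longrightarrow>
        (\<exists>S e. is_subalgebra Alg S \<and> F0 \<subseteq> S \<and> is_identity_of Alg S e \<and> unit_regular_in Alg S e)"
    using lur unfolding locally_unit_regular_def by (rule spec)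
  then have "\<exists>S e. is_subalgebra Alg S \<and> F0 \<subseteq> S \<and> is_identity_of Alg S e \<and> unit_regular_in Alg S e"
    using fin sub by (rule mp[OF _ conjI])
  then obtain S where "\<exists>e. is_subalgebra Alg S \<and> F0 \<subseteq> S \<and> is_identity_of Alg S e \<and> unit_regular_in Alg S e" ..
  then obtain e where SS: "is_subalgebra Alg S \<and> F0 \<subseteq> S \<and> is_identity_of Alg S e \<and> unit_regular_in Alg S e" ..
  note S = SS[THEN conjunct1] SS[THEN conjunct2, THEN conjunct1]
      SS[THEN conjunct2, THEN conjunct2, THEN conjunct1] SS[THEN conjunct2, THEN conjunct2, THEN conjunct2]
  have Scarr: "S \<subseteq> carr Alg" by (rule sub_carr[OF S(1)])
  have eS: "e \<in> S" by (rule id_mem[OF S(3)])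
  define F where "F = Psi e"
  have linS: "x \<in> S \<Longrightarrow> lin (Psi x)" for x by (rule carrE(1)[OF subsetD[OF Scarr]])
  have matS: "x \<in> S \<Longrightarrow> mat (Psi x) = x" for x by (rule carrE(2)[OF subsetD[OF Scarr]])
  have lF: "lin F" using linS[OF eS] F_def by simp
  have eF: "e = mat F" using matS[OF eS] F_def by simp
  have idL: "F \<circ> Psi x = Psi x" if x: "x \<in> S" for x
  proof -
    have "mul Alg e x = x" by (rule id_L[OF S(3) x])
    then have "mat (F \<circ> Psi x) = mat (Psi x)" using matS[OF x] by (simp add: mul_Alg' F_def)
    then show ?thesis by (rule mat_eqD[OF lin_comp[OF lF linS[OF x]] linS[OF x]])
  qed
  have idR: "Psi x \<circ> F = Psi x" if x: "x \<in> S" for x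
  proof -
    have "mul Alg x e = x" by (rule id_R[OF S(3) x])
    then have "mat (Psi x \<circ> F) = mat (Psi x)" using matS[OF x] by (simp add: mul_Alg' F_def)
    then show ?thesis by (rule mat_eqD[OF lin_comp[OF linS[OF x] lF] linS[OF x]])
  qed
  have sS: "mat s0 \<in> S" and tS: "mat t0 \<in> S" using S(2) F0_def by auto
  have Fs: "F \<circ> s0 = s0" "s0 \<circ> F = s0" using idL[OF sS] idR[OF sS] by simp_all
  have Ft: "F \<circ> t0 = t0" "t0 \<circ> F = t0" using idL[OF tS] idR[OF tS] by simp_all
  have FF: "F \<circ> F = F" using idL[OF eS] F_def by simp
  define q where "q = (proj (Sn 1) :: 'k vec \<Rightarrow> 'k vec)"
  have lq: "lin q" by (simp add: q_def)
  have qS: "mat q \<in> S"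
  proof -
    have "mul Alg (mat t0) (mat s0) \<in> S" by (rule sub_mul[OF S(1) tS sS])
    then have "mat (t0 \<circ> s0) \<in> S" by simp
    then show ?thesis unfolding q_def by (simp only: ts0)
  qed
  have Fq: "F \<circ> q = q" "q \<circ> F = q" using idL[OF qS] idR[OF qS] lq by simp_all
  have qq: "q \<circ> q = q" by (simp add: q_def proj_idem)
  have tq: "t0 \<circ> q = t0" "q \<circ> t0 = t0" "s0 \<circ> q = s0" "q \<circ> s0 = s0"
  proof -
    have a1: "\<And>v. s0 (proj (Sn 1) v) = s0 v" "\<And>v. proj (Sn 1) (s0 v) = s0 v"
      using supp_s0 unfolding supp_def by blast+
    have a2: "\<And>v. t0 (proj (Sn 1) v) = t0 v" "\<And>v. proj (Sn 1) (t0 v) = t0 v"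
      using supp_t0 unfolding supp_def by blast+
    show "t0 \<circ> q = t0" "q \<circ> t0 = t0" "s0 \<circ> q = s0" "q \<circ> s0 = s0"
      unfolding q_def comp_def using a1 a2 by (auto intro!: ext simp del: One_nat_def)
  qed
  have ts: "t0 \<circ> s0 = q" by (simp add: ts0 q_def)
  have pw: "\<And>v. F (s0 v) = s0 v" "\<And>v. s0 (F v) = s0 v" "\<And>v. F (t0 v) = t0 v" "\<And>v. t0 (F v) = t0 v"
    "\<And>v. F (F v) = F v" "\<And>v. F (q v) = q v" "\<And>v. q (F v) = q v" "\<And>v. q (q v) = q v"
    "\<And>v. t0 (q v) = t0 v" "\<And>v. q (t0 v) = t0 v" "\<And>v. s0 (q v) = s0 v" "\<And>v. q (s0 v) = s0 v"
    "\<And>v. t0 (s0 v) = q v"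
    using Fs Ft FF Fq qq tq ts by (metis comp_apply)+
  define C where "C = (\<lambda>v. t0 v + (F v + sc (-1) (q v)))"
  define C' where "C' = (\<lambda>v. s0 v + (F v + sc (-1) (q v)))"
  have lC: "lin C" unfolding C_def using lF lq by simp
  have lC': "lin C'" unfolding C'_def using lF lq by simp
  have CS: "mat C \<in> S"
  proof -
    have "smul Alg (-1) (mat q) \<in> S" by (rule sub_smul[OF S(1) qS])
    then have "add Alg e (smul Alg (-1) (mat q)) \<in> S" by (rule sub_add[OF S(1) eS])
    then have "add Alg (mat t0) (add Alg e (smul Alg (-1) (mat q))) \<in> S" by (rule sub_add[OF S(1) tS])
    then show ?thesis using eF lF lq by (simp add: C_def)
  qed
  have C'S: "mat C' \<in> S"
  proof -
    have "smul Alg (-1) (mat q) \<in> S" by (rule sub_smul[OF S(1) qS])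
    then have "add Alg e (smul Alg (-1) (mat q)) \<in> S" by (rule sub_add[OF S(1) eS])
    then have "add Alg (mat s0) (add Alg e (smul Alg (-1) (mat q))) \<in> S" by (rule sub_add[OF S(1) sS])
    then show ?thesis using eF lF lq by (simp add: C'_def)
  qed
  have CC': "C \<circ> C' = F"
  proof
    fix v show "(C \<circ> C') v = F v"
      unfolding C_def C'_def
      by (simp add: VV.linear_add[OF lin_t0] VV.linear_add[OF lF] VV.linear_add[OF lq]
          VV.linear_neg[OF lin_t0] VV.linear_neg[OF lF] VV.linear_neg[OF lq] pw
          VV.linear_diff[OF lin_t0] VV.linear_diff[OF lF] VV.linear_diff[OF lq])
  qed
  have C'C: "(C' \<circ> C) v = s0 (t0 v) + (F v - q v)" for v
    unfolding C_def C'_def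
    by (simp add: VV.linear_add[OF lin_s0] VV.linear_add[OF lF] VV.linear_add[OF lq]
          VV.linear_neg[OF lin_s0] VV.linear_neg[OF lF] VV.linear_neg[OF lq] pw
          VV.linear_diff[OF lin_s0] VV.linear_diff[OF lF] VV.linear_diff[OF lq])
  obtain U where U: "is_unit_in Alg S e U" "mul Alg (mul Alg (mat C) U) (mat C) = mat C"
    using S(4) CS unfolding unit_regular_in_def by blast
  obtain W where W: "U \<in> S" "W \<in> S" "mul Alg U W = e" "mul Alg W U = e"
    using U(1) unfolding is_unit_in_def by blast
  define u where "u = Psi U"
  define w where "w = Psi W"
  have lu: "lin u" and lw: "lin w" using linS W(1,2) u_def w_def by auto
  have "mat (u \<circ> w) = mat F" using W(3) eF by (simp add: mul_Alg' u_def w_def)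
  then have uw: "u \<circ> w = F" by (rule mat_eqD[OF lin_comp[OF lu lw] lF])
  have "mat (w \<circ> u) = mat F" using W(4) eF by (simp add: mul_Alg' u_def w_def)
  then have wu: "w \<circ> u = F" by (rule mat_eqD[OF lin_comp[OF lw lu] lF])
  have CuC: "C \<circ> u \<circ> C = C"
  proof -
    have "mat (C \<circ> u \<circ> C) = mat C"
      using U(2) lC lu by (simp add: mul_Alg' u_def[symmetric])
    then show ?thesis by (rule mat_eqD[OF lin_comp[OF lin_comp[OF lC lu] lC] lC])
  qed
  have uF: "u \<circ> F = u" "F \<circ> u = u" using idR[OF W(1)] idL[OF W(1)] u_def by simp_all
  have wF: "F \<circ> w = w" using idL[OF W(2)] w_def by simp
  have CF: "C \<circ> F = C" using idR[OF CS] lC by simp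
  have FC': "F \<circ> C' = C'" using idL[OF C'S] lC' by simp
  have Cu: "C \<circ> u = F"
  proof -
    have "C \<circ> u = C \<circ> u \<circ> F" using uF by (simp add: comp_assoc)
    also have "\<dots> = C \<circ> u \<circ> C \<circ> C'" using CC' by (simp add: comp_assoc)
    also have "\<dots> = F" using CuC CC' by simp
    finally show ?thesis .
  qed
  have Cw: "C = w"
  proof -
    have "C = C \<circ> F" using CF by simp
    also have "\<dots> = C \<circ> u \<circ> w" using uw by (simp add: comp_assoc)
    also have "\<dots> = w" using Cu wF by simp
    finally show ?thesis .
  qed
  have uC': "u = C'"
  proof -
    have "u = u \<circ> F" using uF by simp
    also have "\<dots> = u \<circ> C \<circ> C'" using CC' by (simp add: comp_assoc)
    also have "\<dots> = C'" using Cw uw FC' by simp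
    finally show ?thesis .
  qed
  have "C' \<circ> C = F" using uC' Cw uw by simp
  then have "s0 (t0 v) + (F v - q v) = F v" for v using C'C[of v] by simp
  then have "s0 (t0 v) = q v" for v by (metis add_diff_cancel diff_add_cancel add.commute diff_eq_eq)
  then show False using st0_ne q_def by metis
qed

theorem mainTheorem16:
  "\<exists>A :: ('k::field, nat \<Rightarrow> nat \<Rightarrow> 'k) kalg.
     is_kalgebra A \<and> elementwise_locally_unit_regular A \<and> \<not> locally_unit_regular A"
  using is_kalg elw not_lur by blast

end
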